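(* Let $q$ be a prime power, $j\ge2$ an integer, $h_{\boldsymbol a}(X)=X^j+a_{j-1}X^{j-1}+\cdots+a_1X+a_0\in\mathbb{F}_q[X]$, and let $L_j=L_j(h_{\boldsymbol a})$ be its companion matrix. Then $\mathrm{rank}(L_j-L_j^T)\ge j-2$. Moreover, if $j$ is odd then $\mathrm{rank}(L_j-L_j^T)=j-1$; if $j$ is even then $\mathrm{rank}(L_j-L_j^T)=j$ if and only if $1+a_0+a_2+a_4+\cdots+a_{j-2}\neq0$.
   Context: The companion matrix $L_j(h_{\boldsymbol a})$ is the $j\times j$ matrix over $\mathbb{F}_q$ whose $i$-th row, for $1\le i\le j-1$, has a $1$ in column $i+1$ and zeros elsewhere, and whose last row is $(-a_0,-a_1,\dots,-a_{j-1})$. *)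

theory Defs
  imports "Jordan_Normal_Form.DL_Rank"
begin

text \<open>Companion matrix L_j(h_a) of the monic polynomial
  X^j + a_(j-1) X^(j-1) + ... + a_1 X + a_0, with 0-based indices:
  row i (for i < j - 1) has a 1 in column i+1 and zeros elsewhere;
  the last row is (-a_0, -a_1, ..., -a_(j-1)).\<close>
definition companion_mat :: "nat \<Rightarrow> (nat \<Rightarrow> 'a::field) \<Rightarrow> 'a mat" where
  "companion_mat j a = mat j j (\<lambda>(i, k).
     if i < j - 1 then (if k = i + 1 then 1 else 0) else - a k)"

end

theory Submission
  imports Defs "Jordan_Normal_Form.DL_Rank_Submatrix"
begin

definition Mf :: "(nat \<Rightarrow> 'a::field) \<Rightarrow> nat \<Rightarrow> nat \<Rightarrow> nat \<Rightarrow> 'a" where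
  "Mf a j i k = (if k = Suc i then 1 else 0) - (if i = Suc k then 1 else 0)
     + (if i < j - 1 \<and> k = j - 1 then a i else 0) - (if i = j - 1 \<and> k < j - 1 then a k else 0)"

lemma sum_Mf:
  fixes a :: "nat \<Rightarrow> 'a::field"
  assumes "i < j"
  shows "(\<Sum>k<j. Mf a j i k * w k) = (if Suc i < j then w (Suc i) else 0) - (if i \<ge> 1 then w (i - 1) else 0)
     + (if i < j - 1 then a i * w (j - 1) else 0) - (if i = j - 1 then (\<Sum>k<j-1. a k * w k) else 0)"
proof -
  have "(\<Sum>k<j. Mf a j i k * w k) = (\<Sum>k<j. (if k = Suc i then w k else 0)) - (\<Sum>k<j. (if k = i - 1 \<and> i \<ge> 1 then w k else 0))
     + (\<Sum>k<j. (if k = j - 1 then (if i < j - 1 then a i * w k else 0) else 0)) - (\<Sum>k<j. (if i = j - 1 then (if k < j - 1 then a k * w k else 0) else 0))"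
    unfolding sum_subtractf[symmetric] sum.distrib[symmetric]
    by (rule sum.cong) (auto simp: Mf_def algebra_simps)
  also have "\<dots> = (if Suc i < j then w (Suc i) else 0) - (if i \<ge> 1 then w (i - 1) else 0)
     + (if i < j - 1 then a i * w (j - 1) else 0) - (if i = j - 1 then (\<Sum>k<j-1. a k * w k) else 0)"
  proof -
    have 1: "(\<Sum>k<j. (if k = i - 1 \<and> i \<ge> 1 then w k else 0)) = (if i \<ge> 1 then w (i - 1) else 0)"
      using assms by (cases "i \<ge> 1") (auto simp: sum.delta)
    have 2: "(\<Sum>k<j. (if i = j - 1 then (if k < j - 1 then a k * w k else 0) else 0)) = (if i = j - 1 then (\<Sum>k<j-1. a k * w k) else 0)"
    proof (cases "i = j - 1")
      case True
      have "(\<Sum>k<j. (if k < j - 1 then a k * w k else 0)) = (\<Sum>k\<in>{..<j} \<inter> {k. k < j - 1}. a k * w k)"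
        by (simp add: sum.inter_restrict)
      also have "{..<j} \<inter> {k. k < j - 1} = {..<j-1}" by auto
      finally show ?thesis using True by simp
    qed simp
    show ?thesis unfolding 1 2 using assms by (auto simp: sum.delta)
  qed
  finally show ?thesis .
qed

lemma Mf_skew: "Mf a j k i = - Mf a j i k" "Mf a j i i = 0"
  unfolding Mf_def by auto

lemma M_eq:
  assumes "j \<ge> 1"
  shows "companion_mat j a - transpose_mat (companion_mat j a) = mat j j (\<lambda>(i,k). Mf a j i k)"
  by (rule eq_matI) (auto simp: companion_mat_def Mf_def intro: arg_cong[of _ _ a])

lemma mulv:
  fixes a :: "nat \<Rightarrow> 'a::field"
  assumes "v \<in> carrier_vec j" "i < j"
  shows "(mat j j (\<lambda>(i,k). Mf a j i k) *\<^sub>v v) $ i = (if Suc i < j then v $ (Suc i) else 0) - (if i \<ge> 1 then v $ (i - 1) else 0)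
     + (if i < j - 1 then a i * v $ (j - 1) else 0) - (if i = j - 1 then (\<Sum>k<j-1. a k * v $ k) else 0)"
proof -
  have "(mat j j (\<lambda>(i,k). Mf a j i k) *\<^sub>v v) $ i = (\<Sum>k<j. Mf a j i k * v $ k)"
    using assms by (auto simp: scalar_prod_def atLeast0LessThan intro!: sum.cong)
  with sum_Mf[OF assms(2), of a "\<lambda>k. v $ k"] show ?thesis by simp
qed

lemma pick_lessThan: "i < m \<Longrightarrow> pick {..<m} i = i"
proof (induction i)
  case 0
  have "pick {..<m} 0 = (LEAST a. a \<in> {..<m})" by simp
  also have "\<dots> = 0" by (rule Least_equality) (use 0 in auto)
  finally show ?case .
next
  case (Suc i)
  then have "pick {..<m} i = i" by simp
  then have "pick {..<m} (Suc i) = (LEAST a. a \<in> {..<m} \<and> a > i)" by simp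
  also have "\<dots> = Suc i" by (rule Least_equality) (use Suc.prems in auto)
  finally show ?case .
qed

lemma skew_sum:
  fixes x :: "nat \<Rightarrow> nat \<Rightarrow> 'a::comm_ring"
  assumes "\<And>i. x i i = 0" "\<And>i k. x k i = - x i k"
  shows "(\<Sum>i<N. \<Sum>k<N. x i k) = 0"
proof (induction N)
  case (Suc N)
  have "(\<Sum>i<Suc N. \<Sum>k<Suc N. x i k) = (\<Sum>i<N. \<Sum>k<N. x i k) + (\<Sum>i<N. x i N + x N i) + x N N"
    by (simp add: sum.distrib)
  also have "\<dots> = 0"
  proof -
    have "(\<Sum>i<N. x i N + x N i) = 0" by (intro sum.neutral ballI) (simp add: assms(2)[of _ N])
    then show ?thesis using Suc assms(1)[of N] by simp
  qed
  finally show ?case .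
qed simp


lemma tri_kernel:
  fixes w :: "nat \<Rightarrow> 'a::field"
  assumes "even m"
    and eq: "\<And>i. i < m \<Longrightarrow> (if Suc i < m then w (Suc i) else 0) - (if i \<ge> 1 then w (i - 1) else 0) = 0"
  shows "i < m \<Longrightarrow> w i = 0"
proof -
  have per: "k < m \<Longrightarrow> w k = w (k mod 2)" for k
  proof (induction k rule: less_induct)
    case (less k)
    show ?case
    proof (cases "k \<ge> 2")
      case True
      have e: "(if Suc (k-1) < m then w (Suc (k-1)) else 0) - (if k - 1 \<ge> 1 then w (k - 1 - 1) else 0) = 0"
        using eq[of "k - 1"] less.prems by simp
      have s1: "Suc (k-1) = k" "k - 1 - 1 = k - 2" "k - 1 \<ge> 1" using True by auto
      with e less.prems have "w k = w (k - 2)" by simp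
      also have "\<dots> = w ((k-2) mod 2)" using less.IH[of "k-2"] less.prems True by simp
      also have "(k-2) mod 2 = k mod 2" using le_mod_geq[of 2 k] True by simp
      finally show ?thesis .
    next
      case False
      then have "k = 0 \<or> k = 1" by auto
      then show ?thesis by auto
    qed
  qed
  assume i: "i < m"
  have "m \<noteq> 0" "m \<noteq> 1" using i assms(1) by auto
  then have m2: "m \<ge> 2" by linarith
  have w1: "w 1 = 0" using eq[of 0] m2 by simp
  have "m - 1 - 1 = m - 2" "1 \<le> m - 1" "\<not> Suc (m - 1) < m" using m2 by auto
  then have "w (m - 2) = 0" using eq[of "m - 1"] m2 by simp
  moreover have "(m - 2) mod 2 = 0" using assms(1) m2 by simp
  ultimately have w0: "w 0 = 0" using per[of "m-2"] m2 by simp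
  have "i mod 2 = 0 \<or> i mod 2 = 1" by auto
  then show "w i = 0" using per[OF i] w0 w1 by auto
qed


lemma mulv_sum:
  assumes "v \<in> carrier_vec j" "i < j"
  shows "(mat j j (\<lambda>(i,k). Mf a j i k) *\<^sub>v v) $ i = (\<Sum>k<j. Mf a j i k * v $ k)"
  using assms by (auto simp: scalar_prod_def atLeast0LessThan intro!: sum.cong)

lemma minor_rank:
  fixes a :: "nat \<Rightarrow> 'a::field"
  assumes "even m" "m \<le> j - 1"
  shows "m \<le> vec_space.rank j (mat j j (\<lambda>(i,k). Mf a j i k))"
proof -
  let ?M = "mat j j (\<lambda>(i,k). Mf a j i k)"
  let ?T = "mat m m (\<lambda>(i,k). Mf (\<lambda>_. 0::'a) m i k)"
  have mj: "m \<le> j" using assms(2) by simp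
  have cardI: "{i. i < j \<and> i \<in> {..<m}} = {..<m}" using mj by auto
  have cardI2: "{i. i < j \<and> i < m} = {..<m}" using mj by auto
  have sub: "submatrix ?M {..<m} {..<m} = ?T"
  proof (rule eq_matI)
    show "dim_row (submatrix ?M {..<m} {..<m}) = dim_row ?T" "dim_col (submatrix ?M {..<m} {..<m}) = dim_col ?T"
      by (simp_all add: dim_submatrix cardI2)
    fix i k assume i: "i < dim_row ?T" and k: "k < dim_col ?T"
    then have "i < m" "k < m" by auto
    then show "submatrix ?M {..<m} {..<m} $$ (i, k) = ?T $$ (i, k)"
      using assms mj by (subst submatrix_index) (auto simp: cardI cardI2 pick_lessThan Mf_def)
  qed
  have "det ?T \<noteq> 0"
  proof
    assume "det ?T = 0"
    then obtain v where v: "v \<in> carrier_vec m" "v \<noteq> 0\<^sub>v m" "?T *\<^sub>v v = 0\<^sub>v m"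
      using det_0_iff_vec_prod_zero_field[of ?T m] by auto
    have "\<And>i. i < m \<Longrightarrow> (if Suc i < m then v $ (Suc i) else 0) - (if i \<ge> 1 then v $ (i - 1) else 0) = 0"
    proof -
      fix i assume i: "i < m"
      have "(?T *\<^sub>v v) $ i = 0" using v(3) i by simp
      moreover have "(?T *\<^sub>v v) $ i = (if Suc i < m then v $ (Suc i) else 0) - (if i \<ge> 1 then v $ (i - 1) else 0)"
        using mulv[OF v(1) i, of "\<lambda>_. 0"] by simp
      ultimately show "(if Suc i < m then v $ (Suc i) else 0) - (if i \<ge> 1 then v $ (i - 1) else 0) = 0"
        by simp
    qed
    then have "\<And>i. i < m \<Longrightarrow> v $ i = 0" using tri_kernel[OF assms(1), of "\<lambda>k. v $ k"] by blast
    then have "v = 0\<^sub>v m" using v(1) by (intro eq_vecI) auto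
    with v(2) show False by simp
  qed
  then have "det (submatrix ?M {..<m} {..<m}) \<noteq> 0" using sub by simp
  from vec_space.rank_gt_minor[OF _ this, of j j] have "card {k. k < j \<and> k \<in> {..<m}} \<le> vec_space.rank j ?M"
    by simp
  then show ?thesis using cardI by simp
qed

lemma even_sum: "(\<Sum>k<Suc (2*N). if even k then g k else 0) = (\<Sum>t<Suc N. g (2*t))"
  by (induction N) auto


lemma even_det0:
  fixes a :: "nat \<Rightarrow> 'a::field"
  assumes j: "j = 2 * n" "n \<ge> 1" and S: "1 + (\<Sum>t<n. a (2 * t)) = 0"
  shows "det (mat j j (\<lambda>(i,k). Mf a j i k)) = 0"
proof -
  let ?M = "mat j j (\<lambda>(i,k). Mf a j i k)"
  define v :: "'a vec" where "v = vec j (\<lambda>k. if even k then 1 else 0)"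
  have v: "v \<in> carrier_vec j" unfolding v_def by simp
  have vj: "v $ (j - 1) = 0" using j unfolding v_def by simp
  have v0: "v $ 0 = 1" using j unfolding v_def by simp
  have "?M *\<^sub>v v = 0\<^sub>v j"
  proof (rule eq_vecI)
    fix i assume "i < dim_vec (0\<^sub>v j :: 'a vec)"
    then have i: "i < j" by simp
    have e: "(?M *\<^sub>v v) $ i = (if Suc i < j then v $ (Suc i) else 0) - (if i \<ge> 1 then v $ (i - 1) else 0)
     + (if i < j - 1 then a i * v $ (j - 1) else 0) - (if i = j - 1 then (\<Sum>k<j-1. a k * v $ k) else 0)"
      by (rule mulv[OF v i])
    show "(?M *\<^sub>v v) $ i = 0\<^sub>v j $ i"
    proof (cases "i = j - 1")
      case True
      have "(\<Sum>k<j-1. a k * v $ k) = (\<Sum>k<Suc (2*(n-1)). if even k then a k else 0)"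
        using j by (intro sum.cong) (auto simp: v_def)
      also have "\<dots> = (\<Sum>t<n. a (2 * t))" using even_sum[of a "n-1"] j by simp
      finally have "(\<Sum>k<j-1. a k * v $ k) = (\<Sum>t<n. a (2 * t))" .
      moreover have "v $ (i - 1) = 1" using True j unfolding v_def by auto
      moreover have "(?M *\<^sub>v v) $ i = - v $ (i - 1) - (\<Sum>k<j-1. a k * v $ k)"
        unfolding e using True j by simp
      ultimately have "(?M *\<^sub>v v) $ i = - (1 + (\<Sum>t<n. a (2 * t)))" by simp
      then show ?thesis using S i by simp
    next
      case False
      then have ij: "Suc i < j" "i < j - 1" using i by auto
      show ?thesis
      proof (cases "even i")
        case True
        then show ?thesis using e ij vj unfolding v_def by auto
      next
        case False
        then have "i \<ge> 1" by (cases i) auto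
        then show ?thesis using e ij vj False unfolding v_def by auto
      qed
    qed
  qed simp
  moreover have "v \<noteq> 0\<^sub>v j" using v0 j by auto
  ultimately show ?thesis using det_0_iff_vec_prod_zero_field[of ?M j] v by auto
qed


lemma even_det:
  fixes a :: "nat \<Rightarrow> 'a::field"
  assumes j: "j = 2 * n" "n \<ge> 1" and S: "1 + (\<Sum>t<n. a (2 * t)) \<noteq> 0"
  shows "det (mat j j (\<lambda>(i,k). Mf a j i k)) \<noteq> 0"
proof
  let ?M = "mat j j (\<lambda>(i,k). Mf a j i k)"
  assume "det ?M = 0"
  then obtain v where v: "v \<in> carrier_vec j" "v \<noteq> 0\<^sub>v j" "?M *\<^sub>v v = 0\<^sub>v j"
    using det_0_iff_vec_prod_zero_field[of ?M j] by auto
  have eq: "(if Suc i < j then v $ (Suc i) else 0) - (if i \<ge> 1 then v $ (i - 1) else 0)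
     + (if i < j - 1 then a i * v $ (j - 1) else 0) - (if i = j - 1 then (\<Sum>k<j-1. a k * v $ k) else 0) = 0"
    if i: "i < j" for i
  proof -
    have "(?M *\<^sub>v v) $ i = 0" using v(3) i by simp
    then show ?thesis using mulv[OF v(1) i, of a] by simp
  qed
  define c where "c = v $ (j - 1)"
  have odd: "v $ (2*m+1) = - c * (\<Sum>t\<le>m. a (2*t))" if "2*m+1 < j" for m
    using that
  proof (induction m)
    case 0
    have "v $ 1 + a 0 * c = 0" using eq[of 0] j unfolding c_def by simp
    then show ?case by (simp add: eq_neg_iff_add_eq_0 algebra_simps)
  next
    case (Suc m)
    have f: "2*m+2 < j - 1" "2*m+2 \<noteq> j - 1" "Suc (2*m+2) < j" "2*m+2 \<ge> 1" "2*m+2 < j" using Suc.prems by auto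
    have "v $ (2*m+3) - v $ (2*m+1) + a (2*m+2) * c = 0"
      using eq[OF f(5)] f unfolding c_def by (simp add: numeral_3_eq_3)
    then have "v $ (2*m+3) = v $ (2*m+1) - a (2*m+2) * c" by (simp add: algebra_simps)
    have "2 * Suc m + 1 = 2*m+3" by simp
    then have "v $ (2 * Suc m + 1) = v $ (2*m+1) - a (2*m+2) * c" using \<open>v $ (2*m+3) = _\<close> by (simp add: numeral_3_eq_3)
    also have "\<dots> = - c * (\<Sum>t\<le>m. a (2*t)) - a (2*Suc m) * c" using Suc by simp
    also have "\<dots> = - c * (\<Sum>t\<le>Suc m. a (2*t))" by (simp add: algebra_simps)
    finally show ?case .
  qed
  have jj: "2*(n-1)+1 = j - 1" "2*(n-1)+1 < j" using j by auto
  have "c = - c * (\<Sum>t\<le>n-1. a (2*t))" using odd[OF jj(2)] unfolding jj(1) c_def .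
  moreover have "{..n-1} = {..<n}" using j by auto
  ultimately have "c * (1 + (\<Sum>t<n. a (2*t))) = 0" by (simp add: algebra_simps eq_neg_iff_add_eq_0)
  then have c0: "c = 0" using S by simp
  have odd0: "v $ k = 0" if "k < j" "odd k" for k
  proof -
    obtain m where "k = 2*m+1" using \<open>odd k\<close> oddE by blast
    then show ?thesis using odd[of m] that c0 by simp
  qed
  have even: "v $ (2*m) = v $ 0" if "2*m < j" for m
    using that
  proof (induction m)
    case (Suc m)
    have f: "2*m+1 < j - 1" "2*m+1 \<noteq> j - 1" "Suc (2*m+1) < j" "2*m+1 \<ge> 1" "2*m+1 < j" using Suc.prems j by auto
    have "v $ (2*m+2) - v $ (2*m) + a (2*m+1) * c = 0"
      using eq[OF f(5)] f unfolding c_def by simp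
    then show ?case using Suc c0 by simp
  qed simp
  have "(\<Sum>k<j-1. a k * v $ k) = (\<Sum>k<Suc (2*(n-1)). if even k then a k * v $ 0 else 0)"
    using j by (intro sum.cong) (auto simp: odd0 even elim!: evenE)
  also have "\<dots> = (\<Sum>t<n. a (2 * t) * v $ 0)" using even_sum[of "\<lambda>k. a k * v $ 0" "n-1"] j by simp
  finally have s: "(\<Sum>k<j-1. a k * v $ k) = (\<Sum>t<n. a (2 * t)) * v $ 0" by (simp add: sum_distrib_right)
  have "2*(n-1) = j - 2" "2*(n-1) < j" using j by auto
  then have "v $ (j - 2) = v $ 0" using even[of "n-1"] by simp
  moreover have "- v $ (j - 2) - (\<Sum>k<j-1. a k * v $ k) = 0"
  proof -
    have f: "j - 1 < j" "\<not> Suc (j-1) < j" "j - 1 \<ge> 1" "j - 1 - 1 = j - 2" using j by auto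
    show ?thesis using eq[OF f(1)] f by simp
  qed
  ultimately have "- v $ 0 - (\<Sum>t<n. a (2 * t)) * v $ 0 = 0" using s by simp
  moreover have "v $ 0 * (1 + (\<Sum>t<n. a (2 * t))) = - (- v $ 0 - (\<Sum>t<n. a (2 * t)) * v $ 0)"
    by (simp add: algebra_simps)
  ultimately have "v $ 0 * (1 + (\<Sum>t<n. a (2 * t))) = 0" by simp
  then have v00: "v $ 0 = 0" using S by simp
  have "v = 0\<^sub>v j"
  proof (rule eq_vecI)
    fix k assume "k < dim_vec (0\<^sub>v j :: 'a vec)"
    then have k: "k < j" by simp
    show "v $ k = 0\<^sub>v j $ k"
    proof (cases "even k")
      case True
      then obtain m where "k = 2*m" by blast
      then show ?thesis using even[of m] k v00 by simp
    qed (use odd0 k in simp)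
  qed (use v in simp)
  with v(2) show False by simp
qed


lemma odd_det:
  fixes a :: "nat \<Rightarrow> 'a::field"
  assumes j: "j = 2 * n + 1" "n \<ge> 1"
  shows "det (mat j j (\<lambda>(i,k). Mf a j i k)) = 0"
proof -
  let ?M = "mat j j (\<lambda>(i,k). Mf a j i k)"
  define f where "f k = (if even k then 1 + (\<Sum>t\<in>{Suc (k div 2)..n}. a (2*t-1)) else - (\<Sum>t\<le>k div 2. a (2*t)))" for k
  define v where "v = vec j f"
  have v: "v \<in> carrier_vec j" unfolding v_def by simp
  have vf: "k < j \<Longrightarrow> v $ k = f k" for k unfolding v_def by simp
  have f2n: "f (2*n) = 1" unfolding f_def by simp
  have low: "(?M *\<^sub>v v) $ i = 0" if i: "i < j - 1" for i
  proof -
    have ij: "i < j" "Suc i < j" "i \<noteq> j - 1" using i j by auto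
    have e: "(?M *\<^sub>v v) $ i = f (Suc i) - (if i \<ge> 1 then f (i - 1) else 0) + a i"
      using mulv[OF v ij(1), of a] ij i j f2n by (simp add: vf)
    consider "i = 0" | m where "i = 2*m+1" | m where "i = 2 * Suc m"
      by (metis evenE oddE not0_implies_Suc mult_0_right)
    then show ?thesis
    proof cases
      case 1
      then show ?thesis using e by (simp add: f_def)
    next
      case 2
      then have mn: "Suc m \<le> n" using i j by simp
      have "f (Suc i) = 1 + (\<Sum>t\<in>{Suc (Suc m)..n}. a (2*t-1))" using 2 unfolding f_def by simp
      moreover have "f (i - 1) = 1 + (\<Sum>t\<in>{Suc m..n}. a (2*t-1))" using 2 unfolding f_def by simp
      moreover have "(\<Sum>t\<in>{Suc m..n}. a (2*t-1)) = a (2*m+1) + (\<Sum>t\<in>{Suc (Suc m)..n}. a (2*t-1))"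
        using sum.atLeast_Suc_atMost[OF mn, of "\<lambda>t. a (2*t-1)"] by simp
      ultimately show ?thesis using e 2 by simp
    next
      case 3
      have "f (Suc i) = - (\<Sum>t\<le>Suc m. a (2*t))" using 3 unfolding f_def by simp
      moreover have "f (i - 1) = - (\<Sum>t\<le>m. a (2*t))" using 3 unfolding f_def by simp
      ultimately show ?thesis using e 3 by simp
    qed
  qed
  have top: "(?M *\<^sub>v v) $ (j - 1) = 0"
  proof -
    define g where "g i = (?M *\<^sub>v v) $ i" for i
    have g: "g i = (\<Sum>k<j. Mf a j i k * f k)" if "i < j" for i
    proof -
      have "g i = (\<Sum>k<j. Mf a j i k * v $ k)" unfolding g_def by (rule mulv_sum[OF v that])
      also have "\<dots> = (\<Sum>k<j. Mf a j i k * f k)" by (rule sum.cong) (auto simp: vf)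
      finally show ?thesis .
    qed
    have "(\<Sum>i<j. \<Sum>k<j. f i * Mf a j i k * f k) = 0"
    proof (rule skew_sum)
      fix i k
      show "f i * Mf a j i i * f i = 0" by (simp add: Mf_skew(2))
      show "f k * Mf a j k i * f i = - (f i * Mf a j i k * f k)"
        by (subst Mf_skew(1)) (simp add: algebra_simps)
    qed
    moreover have "(\<Sum>i<j. \<Sum>k<j. f i * Mf a j i k * f k) = (\<Sum>i<j. f i * g i)"
      by (rule sum.cong) (simp_all add: g sum_distrib_left mult.assoc)
    moreover have "(\<Sum>i<j. f i * g i) = (\<Sum>i<2*n. f i * g i) + f (2*n) * g (2*n)"
      using j by simp
    moreover have "(\<Sum>i<2*n. f i * g i) = 0"
      using low j unfolding g_def by (intro sum.neutral) auto
    ultimately have "g (2*n) = 0" using f2n by simp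
    then show ?thesis using j unfolding g_def by simp
  qed
  have "?M *\<^sub>v v = 0\<^sub>v j"
  proof (rule eq_vecI)
    fix i assume "i < dim_vec (0\<^sub>v j :: 'a vec)"
    then have "i < j" by simp
    then consider "i < j - 1" | "i = j - 1" by linarith
    then show "(?M *\<^sub>v v) $ i = 0\<^sub>v j $ i" using low top \<open>i < j\<close> by cases auto
  qed simp
  moreover have "v \<noteq> 0\<^sub>v j"
  proof
    assume "v = 0\<^sub>v j"
    then have "v $ (2*n) = 0" using j by simp
    then show False using vf[of "2*n"] j f2n by simp
  qed
  ultimately show ?thesis using det_0_iff_vec_prod_zero_field[of ?M j] v by auto
qed


theorem lemma2p7:
  fixes a :: "nat \<Rightarrow> 'a :: {finite, field}" and j :: nat
  assumes "j \<ge> 2"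
  defines "L \<equiv> companion_mat j a"
  shows "vec_space.rank j (L - transpose_mat L) \<ge> j - 2
     \<and> (odd j \<longrightarrow> vec_space.rank j (L - transpose_mat L) = j - 1)
     \<and> (even j \<longrightarrow>
           (vec_space.rank j (L - transpose_mat L) = j
              \<longleftrightarrow> 1 + (\<Sum>i < j div 2. a (2 * i)) \<noteq> 0))"
proof -
  have j1: "j \<ge> 1" using assms by simp
  let ?M = "mat j j (\<lambda>(i,k). Mf a j i k)"
  have LM: "L - transpose_mat L = ?M" unfolding L_def by (rule M_eq[OF j1])
  have car: "?M \<in> carrier_mat j j" by simp
  have le: "vec_space.rank j ?M \<le> j" by (rule vec_space.rank_le_nc[OF car])
  have p1: "j - 2 \<le> vec_space.rank j ?M"
  proof (cases "even j")
    case True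
    then have "even (j - 2)" using assms by simp
    from minor_rank[OF this, of j a] show ?thesis by simp
  next
    case False
    then have "even (j - 1)" using assms by simp
    from minor_rank[OF this, of j a] show ?thesis by simp
  qed
  have p2: "vec_space.rank j ?M = j - 1" if "odd j"
  proof -
    obtain n where n: "j = 2 * n + 1" using \<open>odd j\<close> oddE by blast
    then have "n \<ge> 1" using assms by simp
    from odd_det[OF n this, of a] have "vec_space.rank j ?M \<noteq> j"
      using vec_space.det_rank_iff[OF car] by simp
    moreover have "even (j - 1)" using that by simp
    from minor_rank[OF this, of j a] have "j - 1 \<le> vec_space.rank j ?M" by simp
    ultimately show ?thesis using le by linarith
  qed
  have p3: "vec_space.rank j ?M = j \<longleftrightarrow> 1 + (\<Sum>i < j div 2. a (2 * i)) \<noteq> 0" if "even j"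
  proof -
    obtain n where n: "j = 2 * n" using \<open>even j\<close> by blast
    then have n1: "n \<ge> 1" and jd: "j div 2 = n" using assms by auto
    have "vec_space.rank j ?M = j \<longleftrightarrow> det ?M \<noteq> 0"
      using vec_space.det_rank_iff[OF car] by simp
    also have "\<dots> \<longleftrightarrow> 1 + (\<Sum>i < n. a (2 * i)) \<noteq> 0"
      using even_det[OF n n1, of a] even_det0[OF n n1, of a] by blast
    finally show ?thesis unfolding jd .
  qed
  show ?thesis unfolding LM using p1 p2 p3 by blast
qed

end
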